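(* Let $\alpha,\gamma\in(0,1)$ and let $S:[0,1)^2\to[0,1)^2$ be $$S(x,y)=\begin{cases}(x+\alpha \bmod 1,\ y) & \text{if } x\in[0,1-\alpha),\\ (x+\alpha\bmod 1,\ y+\gamma\bmod 1) & \text{if } x\in[1-\alpha,1).\end{cases}$$ If the three numbers $1,\alpha,\alpha\gamma$ are linearly independent over $\mathbb Q$, then for every $(x_0,y_0)\in[0,1)^2$ the set $\{S^n(x_0,y_0):n\in\mathbb N\}$ is dense in $[0,1)^2$. *)

theory Defs
  imports "HOL-Analysis.Analysis"
begin

definition skewS :: "real \<Rightarrow> real \<Rightarrow> real \<times> real \<Rightarrow> real \<times> real" where
  "skewS \<alpha> \<gamma> p = (let x = fst p; y = snd p in
     if x < 1 - \<alpha> then (frac (x + \<alpha>), y)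
     else (frac (x + \<alpha>), frac (y + \<gamma>)))"

definition lin_indep_Q3 :: "real \<Rightarrow> real \<Rightarrow> real \<Rightarrow> bool" where
  "lin_indep_Q3 a b c \<longleftrightarrow>
     (\<forall>p q r. p \<in> \<rat> \<and> q \<in> \<rat> \<and> r \<in> \<rat> \<and> p * a + q * b + r * c = 0 \<longrightarrow> p = 0 \<and> q = 0 \<and> r = 0)"

end

theory Submission
  imports Defs
begin

lemma iter_formula:
  fixes \<alpha> \<gamma> x y :: real
  assumes "0 \<le> x" "x < 1" "0 \<le> y" "y < 1" "0 < \<alpha>" "\<alpha> < 1"
  shows "(skewS \<alpha> \<gamma> ^^ n) (x, y) = (frac (x + real n * \<alpha>), frac (y + \<gamma> * of_int \<lfloor>x + real n * \<alpha>\<rfloor>))"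
proof (induction n)
  case 0
  have "\<lfloor>x\<rfloor> = 0" using assms by (simp add: floor_eq_iff)
  then show ?case using assms by (simp add: frac_eq)
next
  case (Suc n)
  define t where "t = frac (x + real n * \<alpha>)"
  define f where "f = \<lfloor>x + real n * \<alpha>\<rfloor>"
  have xt: "x + real n * \<alpha> = of_int f + t" unfolding t_def f_def frac_def by simp
  have t01: "0 \<le> t" "t < 1" unfolding t_def by (auto simp: frac_lt_1)
  have e1: "x + real (Suc n) * \<alpha> = of_int f + (t + \<alpha>)" using xt by (simp add: algebra_simps)
  have st: "(skewS \<alpha> \<gamma> ^^ Suc n) (x, y) = skewS \<alpha> \<gamma> (t, frac (y + \<gamma> * of_int f))"
    using Suc.IH by (simp add: t_def f_def)
  show ?case
  proof (cases "t < 1 - \<alpha>")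
    case True
    have "\<lfloor>x + real (Suc n) * \<alpha>\<rfloor> = f" unfolding e1 using True t01 assms
      by (simp add: floor_eq_iff)
    moreover have "frac (x + real (Suc n) * \<alpha>) = frac (t + \<alpha>)" unfolding e1 by simp
    ultimately show ?thesis using True unfolding st by (simp add: skewS_def)
  next
    case False
    have "\<lfloor>x + real (Suc n) * \<alpha>\<rfloor> = f + 1" unfolding e1 using False t01 assms
      by (simp add: floor_eq_iff)
    moreover have "frac (x + real (Suc n) * \<alpha>) = frac (t + \<alpha>)" unfolding e1 by simp
    moreover have "frac (frac (y + \<gamma> * of_int f) + \<gamma>) = frac (y + \<gamma> * of_int (f+1))"
      by (simp add: algebra_simps)
    ultimately show ?thesis using False unfolding st by (simp add: skewS_def)
  qed
qed


lemma indep3: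
  fixes \<alpha> \<gamma> :: real
  assumes "0 < \<alpha>" "\<alpha> < 1" "0 < \<gamma>" "\<gamma> < 1"
    and li: "lin_indep_Q3 1 \<alpha> (\<alpha> * \<gamma>)"
  shows "module.independent (\<lambda>r x. of_int r * x) {\<alpha>, \<alpha> * \<gamma>, 1::real}"
proof -
  interpret Modules.module "(\<lambda>r. (*) (real_of_int r))"
    by (simp add: Modules.module.intro distrib_left mult.commute)
  have d1: "\<alpha> \<noteq> \<alpha> * \<gamma>" "\<alpha> \<noteq> 1" "\<alpha> * \<gamma> \<noteq> 1"
    using assms(1-4) by (auto simp: mult_less_cancel_left1) (smt (verit) mult_less_cancel_left1 mult_le_one)
  show ?thesis
    unfolding independent_explicit_module
  proof (intro allI impI)
    fix t u v
    assume ft: "finite t" and ts: "t \<subseteq> {\<alpha>, \<alpha> * \<gamma>, 1}"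
      and s0: "(\<Sum>v\<in>t. real_of_int (u v) * v) = 0" and vt: "v \<in> t"
    define w where "w z = (if z \<in> t then u z else 0)" for z
    have "(\<Sum>v\<in>t. real_of_int (u v) * v) = (\<Sum>z\<in>{\<alpha>, \<alpha> * \<gamma>, 1}. real_of_int (w z) * z)"
      by (rule sum.mono_neutral_cong_left) (use ts in \<open>auto simp: w_def\<close>)
    also have "\<dots> = real_of_int (w 1) * 1 + real_of_int (w \<alpha>) * \<alpha> + real_of_int (w (\<alpha>*\<gamma>)) * (\<alpha>*\<gamma>)"
      using d1 by (simp add: algebra_simps)
    finally have "real_of_int (w 1) * 1 + real_of_int (w \<alpha>) * \<alpha> + real_of_int (w (\<alpha>*\<gamma>)) * (\<alpha>*\<gamma>) = 0"
      using s0 by simp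
    then have "w 1 = 0 \<and> w \<alpha> = 0 \<and> w (\<alpha>*\<gamma>) = 0"
      using li unfolding lin_indep_Q3_def by (metis Rats_of_int of_int_eq_0_iff)
    then show "u v = 0" using vt ts by (auto simp: w_def)
  qed
qed


lemma approx2:
  fixes \<alpha> \<gamma> A0 A1 \<delta> :: real
  assumes "0 < \<alpha>" "\<alpha> < 1" "0 < \<gamma>" "\<gamma> < 1"
    and li: "lin_indep_Q3 1 \<alpha> (\<alpha> * \<gamma>)" and "\<delta> > 0"
  shows "\<exists>n::nat. \<exists>m0::int. \<exists>m1::int. \<bar>real n * \<alpha> - of_int m0 - A0\<bar> < \<delta> \<and> \<bar>real n * (\<alpha>*\<gamma>) - of_int m1 - A1\<bar> < \<delta>"
proof -
  define \<theta> where "\<theta> i = (if i = 0 then \<alpha> else if i = 1 then \<alpha> * \<gamma> else 1)" for i :: nat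
  define A where "A i = (if i = 0 then A0 else A1)" for i :: nat
  have d1: "\<alpha> \<noteq> \<alpha> * \<gamma>" "\<alpha> \<noteq> 1" "\<alpha> * \<gamma> \<noteq> 1"
    using assms(1-4) by (auto simp: mult_less_cancel_left1) (smt (verit) mult_less_cancel_left1 mult_le_one)
  have img: "\<theta> ` {..2} = {\<alpha>, \<alpha> * \<gamma>, 1}"
    by (auto simp: \<theta>_def atMost_nat_numeral)
  have inj: "inj_on \<theta> {..2}"
    using d1 by (auto simp: inj_on_def \<theta>_def atMost_nat_numeral)
  have ind: "module.independent (\<lambda>r x. of_int r * x) (\<theta> ` {..2})"
    unfolding img using indep3[OF assms(1-5)] .
  obtain k m where km: "\<And>i. i < 2 \<Longrightarrow> \<bar>of_int k * \<theta> i - of_int (m i) - A i\<bar> < \<delta>/2"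
    using Kronecker_thm_2[OF ind inj, of "\<delta>/2" A] assms(6) by (auto simp: \<theta>_def)
  define L :: nat where "L = nat \<bar>k\<bar> + 1"
  define N :: nat where "N = nat \<lceil>2 * L / \<delta>\<rceil> + 1"
  have Npos: "N > 0" by (simp add: N_def)
  have "real L / N < \<delta> / 2"
  proof -
    have "2 * L / \<delta> < N" unfolding N_def by linarith
    then have "2 * L < N * \<delta>" using assms(6) by (simp add: field_simps)
    then show ?thesis using Npos by (simp add: field_simps)
  qed
  obtain q p where q: "0 < q" and qp: "\<And>i. i < 2 \<Longrightarrow> \<bar>of_int q * \<theta> i - of_int (p i)\<bar> < 1 / N"
    using Dirichlet_approx_simult[OF Npos, where \<theta>=\<theta> and n=2] by blast
  have kpos: "k + int L * q > 0"
  proof -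
    have "int L * q \<ge> int L" using q mult_left_mono[of 1 q "int L"] by simp
    then show ?thesis unfolding L_def by linarith
  qed
  define n where "n = nat (k + int L * q)"
  have rn: "real n = of_int k + real L * of_int q" unfolding n_def using kpos by simp
  have est: "\<bar>real n * \<theta> i - of_int (m i + int L * p i) - A i\<bar> < \<delta>" if "i < 2" for i
  proof -
    have "real n * \<theta> i - of_int (m i + int L * p i) - A i
        = (of_int k * \<theta> i - of_int (m i) - A i) + real L * (of_int q * \<theta> i - of_int (p i))"
      unfolding rn by (simp add: algebra_simps)
    moreover have "\<bar>real L * (of_int q * \<theta> i - of_int (p i))\<bar> \<le> real L * (1 / N)"
      using mult_left_mono[OF less_imp_le[OF qp[OF that]], of "real L"] by (simp add: abs_mult)
    moreover have "real L * (1 / N) < \<delta> / 2" using \<open>real L / N < \<delta> / 2\<close> by simp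
    ultimately show ?thesis using km[OF that] by linarith
  qed
  show ?thesis
    using est[of 0] est[of 1] by (intro exI[of _ n] exI[of _ "m 0 + int L * p 0"] exI[of _ "m 1 + int L * p 1"]) (simp add: \<theta>_def A_def)
qed


lemma dist_pair_le: "dist (a::real, b::real) (c, d) \<le> \<bar>a - c\<bar> + \<bar>b - d\<bar>"
  using sqrt_sum_squares_le_sum_abs[of "a - c" "b - d"] by (simp add: dist_Pair_Pair dist_real_def)

theorem proposition2:
  fixes \<alpha> \<gamma> x0 y0 :: real
  assumes "0 < \<alpha>" "\<alpha> < 1" "0 < \<gamma>" "\<gamma> < 1"
    and "lin_indep_Q3 1 \<alpha> (\<alpha> * \<gamma>)"
    and "x0 \<in> {0..<1}" "y0 \<in> {0..<1}"
  shows "{0..<1} \<times> {0..<1} \<subseteq> closure {(skewS \<alpha> \<gamma> ^^ n) (x0, y0) | n :: nat. True}"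
proof
  fix z assume "z \<in> {0..<(1::real)} \<times> {0..<(1::real)}"
  then obtain a b where z: "z = (a, b)" and ab: "0 \<le> a" "a < 1" "0 \<le> b" "b < 1" by auto
  show "z \<in> closure {(skewS \<alpha> \<gamma> ^^ n) (x0, y0) | n :: nat. True}"
    unfolding closure_approachable
  proof (intro allI impI)
    fix e :: real assume e: "e > 0"
    define a' where "a' = a + min (e/4) ((1-a)/2)"
    define b' where "b' = b + min (e/4) ((1-b)/2)"
    have a': "0 < a'" "a' < 1" "a' - a \<le> e/4" using ab e unfolding a'_def by (auto simp: min_def field_simps)
    have b': "0 < b'" "b' < 1" "b' - b \<le> e/4" using ab e unfolding b'_def by (auto simp: min_def field_simps)
    define \<delta> where "\<delta> = min (min (a'/2) ((1-a')/2)) (min (min (b'/4) ((1-b')/4)) (e/8))"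
    have \<delta>: "\<delta> > 0" "\<delta> \<le> a'/2" "\<delta> \<le> (1-a')/2" "\<delta> \<le> b'/4" "\<delta> \<le> (1-b')/4" "\<delta> \<le> e/8"
      using a' b' e unfolding \<delta>_def min_def by auto
    obtain n m0 m1 where
      e1: "\<bar>real n * \<alpha> - of_int m0 - (a' - x0)\<bar> < \<delta>" and
      e2: "\<bar>real n * (\<alpha>*\<gamma>) - of_int m1 - (b' - y0 - \<gamma> * x0 + \<gamma> * a')\<bar> < \<delta>"
      using approx2[OF assms(1-5) \<delta>(1)] by blast
    define r1 where "r1 = real n * \<alpha> - of_int m0 - (a' - x0)"
    define r2 where "r2 = real n * (\<alpha>*\<gamma>) - of_int m1 - (b' - y0 - \<gamma> * x0 + \<gamma> * a')"
    have X: "x0 + real n * \<alpha> = of_int m0 + (a' + r1)" unfolding r1_def by simp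
    have r1b: "0 \<le> a' + r1" "a' + r1 < 1" using e1 \<delta> unfolding r1_def by auto
    have fl: "\<lfloor>x0 + real n * \<alpha>\<rfloor> = m0" unfolding X using r1b by (simp add: floor_eq_iff)
    have fr: "frac (x0 + real n * \<alpha>) = a' + r1" unfolding X using r1b by (simp add: frac_eq)
    have Y: "y0 + \<gamma> * of_int m0 = of_int m1 + (b' + r2 - \<gamma> * r1)"
      unfolding r1_def r2_def by (simp add: algebra_simps)
    have gr1: "\<bar>\<gamma> * r1\<bar> < \<delta>"
    proof -
      have "\<bar>\<gamma> * r1\<bar> = \<gamma> * \<bar>r1\<bar>" using assms(3) by (simp add: abs_mult)
      also have "\<dots> \<le> \<bar>r1\<bar>" using assms(3,4) by (intro mult_left_le_one_le) auto
      finally show ?thesis using e1 unfolding r1_def by linarith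
    qed
    have r2b: "0 \<le> b' + r2 - \<gamma> * r1" "b' + r2 - \<gamma> * r1 < 1" using e2 gr1 \<delta> unfolding r2_def by auto
    have fr2: "frac (y0 + \<gamma> * of_int m0) = b' + r2 - \<gamma> * r1" unfolding Y using r2b by (simp add: frac_eq)
    have pt: "(skewS \<alpha> \<gamma> ^^ n) (x0, y0) = (a' + r1, b' + r2 - \<gamma> * r1)"
      using iter_formula[where x=x0 and y=y0 and \<alpha>=\<alpha> and \<gamma>=\<gamma> and n=n] assms(1,2,6,7) fl fr fr2 by simp
    have "dist (a' + r1, b' + r2 - \<gamma> * r1) (a, b) \<le> \<bar>a' + r1 - a\<bar> + \<bar>b' + r2 - \<gamma> * r1 - b\<bar>"
      by (rule dist_pair_le)
    also have "\<dots> < e"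
    proof -
      have "a \<le> a'" "b \<le> b'" using ab e unfolding a'_def b'_def by (auto simp: min_def)
      moreover have "\<bar>r1\<bar> < \<delta>" "\<bar>r2\<bar> < \<delta>" using e1 e2 unfolding r1_def r2_def by auto
      ultimately show ?thesis using a' b' gr1 \<delta> by (auto simp: abs_less_iff split: abs_split)
    qed
    finally show "\<exists>y\<in>{(skewS \<alpha> \<gamma> ^^ n) (x0, y0) | n :: nat. True}. dist y z < e"
      using pt z by (intro bexI[of _ "(skewS \<alpha> \<gamma> ^^ n) (x0, y0)"]) (auto intro: exI[of _ n])
  qed
qed

end
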